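(* Let $t \geq 1$ and $p \geq 3$ be integers. Let $m_1, \dots, m_p$ be distinct real numbers and $c_1, \dots, c_p$ be distinct real numbers. For $i, j \in [p]$ let $L_{i,j}$ be the line $\{(x, m_i x + c_j) : x \in \mathbb{R}\} \subseteq \mathbb{R}^2$, and let $A_{i,j}$ be the set of points $(a,b) \in \mathbb{R}^2$ for which there exist $i', j' \in [p]$ with $(i',j') \neq (i,j)$ such that $L_{i,j}$ and $L_{i',j'}$ intersect at $(a,b)$. To each point $(a,b)$ in $\bigcup_{i,j} A_{i,j}$ assign a $t$-element set $T_{(a,b)}$, these sets being pairwise disjoint, and let $B_{i,j} = \bigcup_{(a,b) \in A_{i,j}} T_{(a,b)}$. Let $\mathcal{B} = \{B_{i,j} : i, j \in [p]\}$. Let $\mathcal{L}$ be a largest $t$-intersecting sub-family of $\mathcal{B}$, let $k \geq 1$ be an integer and let $\mathcal{A}_1, \dots, \mathcal{A}_k$ be cross-$t$-intersecting sub-families of $\mathcal{B}$. Then: (i) $\kappa(\mathcal{B},t) = |\mathcal{L}| = p$; (ii) if $k \geq \kappa(\mathcal{B},t)$ and $\mathcal{A}_1 = \dots = \mathcal{A}_k = \mathcal{L}$, then $\prod_{i=1}^k |\mathcal{A}_i|$ is maximum among all $k$-tuples of cross-$t$-intersecting sub-families of $\mathcal{B}$; (iii) if $k < \kappa(\mathcal{B},t)$ and $\mathcal{A}_1 = \dots = \mathcal{A}_k = \mathcal{L}$, then $\prod_{i=1}^k |\mathcal{A}_i|$ is not maximum among all $k$-tuples of cross-$t$-intersecting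 sub-families of $\mathcal{B}$.
   Context: $[p] = \{1,\dots,p\}$. A family $\mathcal{A}$ is $t$-intersecting if $|A \cap B| \geq t$ for all $A, B \in \mathcal{A}$ with $A \neq B$. Families $\mathcal{A}_1, \dots, \mathcal{A}_k$ (not necessarily distinct or non-empty) are cross-$t$-intersecting if for all $i \neq j$, $|A \cap B| \geq t$ for every $A \in \mathcal{A}_i$, $B \in \mathcal{A}_j$. $l(\mathcal{F},t)$ is the size of a largest $t$-intersecting sub-family of $\mathcal{F}$. For a family $\mathcal{A}$, $\mathcal{A}^{t,+} = \{A \in \mathcal{A} : |A \cap B| \geq t \text{ for all } B \in \mathcal{A}\setminus\{A\}\}$ and $\mathcal{A}^{t,-} = \mathcal{A} \setminus \mathcal{A}^{t,+}$. For $\mathcal{A} \subseteq \mathcal{F}$, $\beta(\mathcal{F},t,\mathcal{A}) = \frac{l(\mathcal{F},t) - |\mathcal{A}^{t,+}|}{|\mathcal{A}^{t,-}|}$ if $\mathcal{A}^{t,-} \neq \emptyset$, and $\frac{l(\mathcal{F},t)}{|\mathcal{F}|}$ otherwise; $\beta(\mathcal{F},t) = \min_{\mathcal{A} \subseteq \mathcal{F}} \beta(\mathcal{F},t,\mathcal{A})$ and $\kappa(\mathcal{F},t) = 1/\beta(\mathcal{F},t)$. *)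

theory Defs
  imports Complex_Main
begin

definition t_intersecting :: "nat \<Rightarrow> 'a set set \<Rightarrow> bool" where
  "t_intersecting t \<A> \<longleftrightarrow> (\<forall>A\<in>\<A>. \<forall>B\<in>\<A>. A \<noteq> B \<longrightarrow> t \<le> card (A \<inter> B))"

definition cross_t_intersecting :: "nat \<Rightarrow> nat \<Rightarrow> (nat \<Rightarrow> 'a set set) \<Rightarrow> bool" where
  "cross_t_intersecting t k As \<longleftrightarrow>
     (\<forall>i\<in>{1..k}. \<forall>j\<in>{1..k}. i \<noteq> j \<longrightarrow> (\<forall>A\<in>As i. \<forall>B\<in>As j. t \<le> card (A \<inter> B)))"

definition l_fam :: "'a set set \<Rightarrow> nat \<Rightarrow> nat" where
  "l_fam F t = Max {card \<A> | \<A>. \<A> \<subseteq> F \<and> t_intersecting t \<A>}"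

definition tplus :: "nat \<Rightarrow> 'a set set \<Rightarrow> 'a set set" where
  "tplus t \<A> = {A \<in> \<A>. \<forall>B \<in> \<A> - {A}. t \<le> card (A \<inter> B)}"

definition tminus :: "nat \<Rightarrow> 'a set set \<Rightarrow> 'a set set" where
  "tminus t \<A> = \<A> - tplus t \<A>"

definition beta_of :: "'a set set \<Rightarrow> nat \<Rightarrow> 'a set set \<Rightarrow> real" where
  "beta_of F t \<A> =
     (if tminus t \<A> \<noteq> {}
      then (real (l_fam F t) - real (card (tplus t \<A>))) / real (card (tminus t \<A>))
      else real (l_fam F t) / real (card F))"

definition beta :: "'a set set \<Rightarrow> nat \<Rightarrow> real" where
  "beta F t = Min {beta_of F t \<A> | \<A>. \<A> \<subseteq> F}"

definition kappa :: "'a set set \<Rightarrow> nat \<Rightarrow> real" where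
  "kappa F t = 1 / beta F t"

definition line_ij :: "(nat \<Rightarrow> real) \<Rightarrow> (nat \<Rightarrow> real) \<Rightarrow> nat \<Rightarrow> nat \<Rightarrow> (real \<times> real) set" where
  "line_ij m c i j = {(x, m i * x + c j) | x. True}"

definition pts_ij :: "nat \<Rightarrow> (nat \<Rightarrow> real) \<Rightarrow> (nat \<Rightarrow> real) \<Rightarrow> nat \<Rightarrow> nat \<Rightarrow> (real \<times> real) set" where
  "pts_ij p m c i j = {P. \<exists>i'\<in>{1..p}. \<exists>j'\<in>{1..p}. (i', j') \<noteq> (i, j) \<and>
        P \<in> line_ij m c i j \<inter> line_ij m c i' j'}"

definition B_ij :: "nat \<Rightarrow> (nat \<Rightarrow> real) \<Rightarrow> (nat \<Rightarrow> real) \<Rightarrow> (real \<times> real \<Rightarrow> 'a set) \<Rightarrow> nat \<Rightarrow> nat \<Rightarrow> 'a set" where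
  "B_ij p m c T i j = (\<Union>P \<in> pts_ij p m c i j. T P)"

definition B_fam :: "nat \<Rightarrow> (nat \<Rightarrow> real) \<Rightarrow> (nat \<Rightarrow> real) \<Rightarrow> (real \<times> real \<Rightarrow> 'a set) \<Rightarrow> 'a set set" where
  "B_fam p m c T = {B_ij p m c T i j | i j. i \<in> {1..p} \<and> j \<in> {1..p}}"

end

theory Submission imports Defs "HOL-Analysis.Analysis" begin
locale grid =
  fixes F :: "'a set set" and sl :: "'a set \<Rightarrow> nat" and p t :: nat
  assumes fin: "finite F" and p2: "p \<ge> 2" and t1: "t \<ge> 1"
  and sl_range: "\<forall>X\<in>F. sl X \<in> {1..p}"
  and row_card: "\<forall>s\<in>{1..p}. card {X\<in>F. sl X = s} = p"
  and inter: "\<forall>X\<in>F. \<forall>Y\<in>F. t \<le> card (X\<inter>Y) \<longleftrightarrow> (X = Y \<or> sl X \<noteq> sl Y)"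
begin

lemma inter_iff: "X \<in> F \<Longrightarrow> Y \<in> F \<Longrightarrow> t \<le> card (X\<inter>Y) \<longleftrightarrow> (X = Y \<or> sl X \<noteq> sl Y)"
  using inter by blast

lemma same_sl: "X \<in> F \<Longrightarrow> Y \<in> F \<Longrightarrow> t \<le> card (X\<inter>Y) \<Longrightarrow> sl X = sl Y \<Longrightarrow> X = Y"
  using inter_iff by blast

lemma rows_card: assumes "U \<subseteq> {1..p}" shows "card {X\<in>F. sl X \<in> U} = p * card U"
proof -
  have e: "{X\<in>F. sl X \<in> U} = (\<Union>s\<in>U. {X\<in>F. sl X = s})" by blast
  have fU: "finite U" using assms finite_subset by blast
  have "card (\<Union>s\<in>U. {X\<in>F. sl X = s}) = (\<Sum>s\<in>U. card {X\<in>F. sl X = s})"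
    by (rule card_UN_disjoint) (use fU fin in auto)
  also have "\<dots> = (\<Sum>s\<in>U. p)" using row_card assms by (intro sum.cong) auto
  finally show ?thesis using e by simp
qed

lemma card_F: "card F = p * p"
proof -
  have "F = {X\<in>F. sl X \<in> {1..p}}" using sl_range by blast
  then show ?thesis using rows_card[of "{1..p}"] by simp
qed

lemma card_split: assumes "A \<subseteq> F" shows "card A = (\<Sum>s\<in>{1..p}. card {X\<in>A. sl X = s})"
proof -
  have e: "A = (\<Union>s\<in>{1..p}. {X\<in>A. sl X = s})" using assms sl_range by blast
  have fA: "finite A" using assms fin finite_subset by blast
  have "card (\<Union>s\<in>{1..p}. {X\<in>A. sl X = s}) = (\<Sum>s\<in>{1..p}. card {X\<in>A. sl X = s})"
    by (rule card_UN_disjoint) (use fA in auto)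
  then show ?thesis using e by simp
qed

lemma tint_le: assumes "A \<subseteq> F" "t_intersecting t A" shows "card A \<le> p"
proof -
  have i: "inj_on sl A"
  proof (rule inj_onI)
    fix X Y assume XY: "X \<in> A" "Y \<in> A" "sl X = sl Y"
    show "X = Y"
    proof (rule ccontr)
      assume "X \<noteq> Y"
      then have "t \<le> card (X \<inter> Y)" using XY assms(2) unfolding t_intersecting_def by blast
      then show False using same_sl[of X Y] XY assms(1) \<open>X \<noteq> Y\<close> by blast
    qed
  qed
  have s: "sl ` A \<subseteq> {1..p}" using assms sl_range by blast
  have "card A \<le> card {1..p}" by (rule card_inj_on_le[OF i s]) simp
  then show ?thesis by simp
qed

lemma exists_tint: "\<exists>A\<subseteq>F. t_intersecting t A \<and> card A = p"
proof -
  define ch where "ch s = (SOME X. X \<in> F \<and> sl X = s)" for s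
  have ch: "ch s \<in> F \<and> sl (ch s) = s" if "s \<in> {1..p}" for s
  proof -
    have "card {X\<in>F. sl X = s} = p" using row_card that by blast
    then have "{X\<in>F. sl X = s} \<noteq> {}" using p2 by (metis card.empty not_numeral_le_zero)
    then have "\<exists>X. X \<in> F \<and> sl X = s" by blast
    then show ?thesis unfolding ch_def by (rule someI_ex)
  qed
  have inj: "inj_on ch {1..p}" by (rule inj_onI) (metis ch)
  show ?thesis
  proof (intro exI conjI)
    show "ch ` {1..p} \<subseteq> F" using ch by blast
    show "card (ch ` {1..p}) = p" using card_image[OF inj] by simp
    show "t_intersecting t (ch ` {1..p})" unfolding t_intersecting_def
    proof (intro ballI impI)
      fix X Y assume XY: "X \<in> ch ` {1..p}" "Y \<in> ch ` {1..p}" "X \<noteq> Y"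
      then obtain a b where ab: "a \<in> {1..p}" "b \<in> {1..p}" "X = ch a" "Y = ch b" by blast
      have "sl X \<noteq> sl Y" using ch ab XY by metis
      then show "t \<le> card (X \<inter> Y)" using inter_iff[of X Y] ch ab by simp
    qed
  qed
qed

lemma l_fam_eq: "l_fam F t = p"
  unfolding l_fam_def
proof (rule Max_eqI)
  show "finite {card A |A. A \<subseteq> F \<and> t_intersecting t A}"
  proof (rule finite_subset)
    show "{card A |A. A \<subseteq> F \<and> t_intersecting t A} \<subseteq> card ` Pow F" by blast
  qed (use fin in auto)
  show "y \<le> p" if "y \<in> {card A |A. A \<subseteq> F \<and> t_intersecting t A}" for y
    using that tint_le by blast
  show "p \<in> {card A |A. A \<subseteq> F \<and> t_intersecting t A}" using exists_tint by blast
qed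

lemma beta_of_ge: assumes "A \<subseteq> F" shows "beta_of F t A \<ge> 1 / real p"
proof (cases "tminus t A \<noteq> {}")
  case False
  then show ?thesis unfolding beta_of_def using l_fam_eq card_F p2 by simp
next
  case True
  define Ap where "Ap = tplus t A"
  define Am where "Am = tminus t A"
  have ApA: "Ap \<subseteq> A" unfolding Ap_def tplus_def by blast
  have injA: "inj_on sl Ap"
  proof (rule inj_onI)
    fix X Y assume XY: "X \<in> Ap" "Y \<in> Ap" "sl X = sl Y"
    show "X = Y"
    proof (rule ccontr)
      assume ne: "X \<noteq> Y"
      then have "t \<le> card (X \<inter> Y)" using XY unfolding Ap_def tplus_def by blast
      moreover have "X \<in> F" "Y \<in> F" using XY ApA assms by blast+
      ultimately show False using same_sl[of X Y] XY ne by blast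
    qed
  qed
  define S where "S = sl ` Ap"
  have S: "S \<subseteq> {1..p}" using ApA assms sl_range unfolding S_def by blast
  have cS: "card S = card Ap" unfolding S_def using card_image[OF injA] .
  have "Am \<subseteq> {X\<in>F. sl X \<in> {1..p} - S}"
  proof
    fix X assume X: "X \<in> Am"
    then have XA: "X \<in> A" "X \<notin> Ap" unfolding Am_def Ap_def tminus_def by auto
    have "sl X \<notin> S"
    proof
      assume "sl X \<in> S"
      then obtain Y where Y: "Y \<in> Ap" "sl Y = sl X" unfolding S_def by (metis imageE)
      then have "Y \<noteq> X" using XA by blast
      then have "t \<le> card (Y \<inter> X)" using Y XA unfolding Ap_def tplus_def by blast
      moreover have "X \<in> F" "Y \<in> F" using XA Y ApA assms by blast+
      ultimately show False using same_sl[of Y X] Y \<open>Y \<noteq> X\<close> by simp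
    qed
    then show "X \<in> {X\<in>F. sl X \<in> {1..p} - S}" using XA assms sl_range by blast
  qed
  then have "card Am \<le> card {X\<in>F. sl X \<in> {1..p} - S}"
    by (intro card_mono) (use fin in auto)
  also have "\<dots> = p * card ({1..p} - S)" using rows_card[of "{1..p} - S"] by blast
  also have "\<dots> = p * (p - card Ap)" using S cS by (simp add: card_Diff_subset finite_subset)
  finally have cAm: "card Am \<le> p * (p - card Ap)" .
  have cAp: "card Ap \<le> p" using cS S by (metis card_atLeastAtMost card_mono diff_Suc_1 finite_atLeastAtMost)
  have Am0: "card Am > 0" using True fin assms unfolding Am_def tminus_def
    by (meson Diff_subset card_gt_0_iff finite_subset)
  have "real (card Am) \<le> real p * (real p - real (card Ap))"
    using cAm cAp by (metis of_nat_diff of_nat_le_iff of_nat_mult)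
  then have "1 / real p \<le> (real p - real (card Ap)) / real (card Am)"
    using Am0 p2 by (simp add: field_simps)
  then show ?thesis unfolding beta_of_def using True l_fam_eq Ap_def Am_def by simp
qed

lemma beta_eq: "beta F t = 1 / real p"
  unfolding beta_def
proof (rule Min_eqI)
  show "finite {beta_of F t A |A. A \<subseteq> F}"
  proof (rule finite_subset)
    show "{beta_of F t A |A. A \<subseteq> F} \<subseteq> beta_of F t ` Pow F" by blast
  qed (use fin in auto)
  show "1 / real p \<le> y" if "y \<in> {beta_of F t A |A. A \<subseteq> F}" for y
    using that beta_of_ge by blast
  have "beta_of F t {} = 1 / real p"
    unfolding beta_of_def tminus_def tplus_def using l_fam_eq card_F p2 by simp
  then show "1 / real p \<in> {beta_of F t A |A. A \<subseteq> F}" by force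
qed

lemma kappa_eq: "kappa F t = real p"
  unfolding kappa_def beta_eq by simp

lemma slope_sum: assumes "p \<le> k" "\<forall>i\<in>{1..k}. Cs i \<subseteq> F" "cross_t_intersecting t k Cs"
  and s: "s \<in> {1..p}"
  shows "(\<Sum>i=1..k. card {X\<in>Cs i. sl X = s}) \<le> k"
proof -
  define R where "R i = {X\<in>Cs i. sl X = s}" for i
  show ?thesis
  proof (cases "\<exists>i\<in>{1..k}. \<exists>j\<in>{1..k}. i \<noteq> j \<and> R i \<noteq> {} \<and> R j \<noteq> {}")
    case True
    then obtain i j where ij: "i\<in>{1..k}" "j\<in>{1..k}" "i \<noteq> j" "R i \<noteq> {}" "R j \<noteq> {}" by blast
    have le1: "card (R l) \<le> 1" if l: "l \<in> {1..k}" for l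
    proof (cases "R l = {}")
      case True then show ?thesis by simp
    next
      case False
      obtain m where m: "m \<in> {1..k}" "m \<noteq> l" "R m \<noteq> {}" using ij by metis
      then obtain Y where Y: "Y \<in> R m" by blast
      have "R l \<subseteq> {Y}"
      proof
        fix X assume X: "X \<in> R l"
        have cr: "\<forall>A\<in>Cs l. \<forall>B\<in>Cs m. t \<le> card (A \<inter> B)"
          using assms(3) l m(1,2) unfolding cross_t_intersecting_def by metis
        have XC: "X \<in> Cs l" "Y \<in> Cs m" using X Y unfolding R_def by simp_all
        have "t \<le> card (X \<inter> Y)" using cr XC by blast
        moreover have "X \<in> F" "Y \<in> F" using XC l m(1) assms(2) by blast+
        moreover have "sl X = sl Y" using X Y unfolding R_def by simp
        ultimately show "X \<in> {Y}" using same_sl[of X Y] by simp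
      qed
      then show ?thesis using card_mono[of "{Y}" "R l"] by simp
    qed
    have "(\<Sum>i=1..k. card (R i)) \<le> (\<Sum>i=1..k. 1)" by (intro sum_mono) (use le1 in auto)
    then show ?thesis unfolding R_def by simp
  next
    case False
    show ?thesis
    proof (cases "\<exists>i\<in>{1..k}. R i \<noteq> {}")
      case True
      then obtain i where i: "i \<in> {1..k}" "R i \<noteq> {}" by blast
      have z: "R j = {}" if "j \<in> {1..k} - {i}" for j using False i that by blast
      have "(\<Sum>i=1..k. card (R i)) = card (R i) + (\<Sum>j\<in>{1..k}-{i}. card (R j))"
        by (rule sum.remove) (use i in auto)
      also have "(\<Sum>j\<in>{1..k}-{i}. card (R j)) = 0" using z by simp
      also have "card (R i) \<le> card {X\<in>F. sl X = s}"
        by (intro card_mono) (use fin assms(2) i in \<open>auto simp: R_def\<close>)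
      also have "\<dots> = p" using row_card s by blast
      finally show ?thesis unfolding R_def using assms(1) by simp
    next
      case False
      then have "(\<Sum>i=1..k. card (R i)) = 0" by simp
      then show ?thesis unfolding R_def by simp
    qed
  qed
qed

lemma sum_bound: assumes "p \<le> k" "\<forall>i\<in>{1..k}. Cs i \<subseteq> F" "cross_t_intersecting t k Cs"
  shows "(\<Sum>i=1..k. card (Cs i)) \<le> p * k"
proof -
  have "(\<Sum>i=1..k. card (Cs i)) = (\<Sum>i=1..k. \<Sum>s=1..p. card {X\<in>Cs i. sl X = s})"
    using card_split assms(2) by (intro sum.cong) auto
  also have "\<dots> = (\<Sum>s=1..p. \<Sum>i=1..k. card {X\<in>Cs i. sl X = s})" by (rule sum.swap)
  also have "\<dots> \<le> (\<Sum>s=1..p. k)" by (intro sum_mono slope_sum[OF assms])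
  finally show ?thesis by simp
qed

lemma prod_bound: assumes "p \<le> k" "\<forall>i\<in>{1..k}. Cs i \<subseteq> F" "cross_t_intersecting t k Cs"
  shows "(\<Prod>i=1..k. card (Cs i)) \<le> p ^ k"
proof -
  have k0: "k > 0" using assms(1) p2 by simp
  define x where "x i = real (card (Cs i))" for i
  have "(\<Sum>i\<in>{1..k}. x i / card {1..k}) \<ge> (\<Prod>i\<in>{1..k}. x i) powr (1 / card {1..k})"
    by (rule arith_geom_mean) (use k0 in \<open>auto simp: x_def\<close>)
  moreover have "(\<Sum>i\<in>{1..k}. x i / card {1..k}) = (\<Sum>i\<in>{1..k}. x i) / k"
    by (simp add: sum_divide_distrib)
  moreover have "(\<Sum>i\<in>{1..k}. x i) \<le> real p * real k"
    using sum_bound[OF assms] unfolding x_def by (metis of_nat_le_iff of_nat_mult of_nat_sum)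
  ultimately have le: "(\<Prod>i\<in>{1..k}. x i) powr (1 / real k) \<le> real p"
  proof -
    assume a: "(\<Sum>i\<in>{1..k}. x i / card {1..k}) \<ge> (\<Prod>i\<in>{1..k}. x i) powr (1 / card {1..k})"
      "(\<Sum>i\<in>{1..k}. x i / card {1..k}) = (\<Sum>i\<in>{1..k}. x i) / k"
      "(\<Sum>i\<in>{1..k}. x i) \<le> real p * real k"
    have "(\<Sum>i\<in>{1..k}. x i) / k \<le> real p" using a(3) k0 by (simp add: divide_le_eq)
    then show ?thesis using a(1,2) by simp
  qed
  have P0: "(\<Prod>i\<in>{1..k}. x i) \<ge> 0" unfolding x_def by (simp add: prod_nonneg)
  have "(\<Prod>i\<in>{1..k}. x i) = ((\<Prod>i\<in>{1..k}. x i) powr (1 / real k)) powr (real k)"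
    using k0 P0 by (simp add: powr_powr)
  also have "\<dots> \<le> real p powr real k"
    by (rule powr_mono2) (use le in auto)
  also have "\<dots> = real p ^ k" using p2 by (simp add: powr_realpow)
  finally have "real (\<Prod>i=1..k. card (Cs i)) \<le> real (p ^ k)" unfolding x_def by simp
  then show ?thesis by linarith
qed

lemma construct: assumes "1 \<le> k" "k < p"
  shows "\<exists>Cs. (\<forall>i\<in>{1..k}. Cs i \<subseteq> F) \<and> cross_t_intersecting t k Cs \<and>
                 (\<Prod>i=1..k. card (Cs i)) > p ^ k"
proof -
  define S where "S l = (if l = 1 then {1..p-k+1} else {p-k+l})" for l
  define Cs where "Cs l = {X\<in>F. sl X \<in> S l}" for l
  have SS: "S l \<subseteq> {1..p}" if "l \<in> {1..k}" for l using that assms unfolding S_def by auto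
  have disj: "S l \<inter> S l' = {}" if "l \<in> {1..k}" "l' \<in> {1..k}" "l \<noteq> l'" for l l'
    using that assms unfolding S_def by auto
  have cr: "cross_t_intersecting t k Cs" unfolding cross_t_intersecting_def
  proof (intro ballI impI)
    fix i j X Y assume "i \<in> {1..k}" "j \<in> {1..k}" "i \<noteq> j" "X \<in> Cs i" "Y \<in> Cs j"
    then show "t \<le> card (X \<inter> Y)" using disj[of i j] inter unfolding Cs_def by auto
  qed
  have c: "card (Cs l) = p * card (S l)" if "l \<in> {1..k}" for l
    unfolding Cs_def using rows_card SS that by blast
  have "(\<Prod>i=1..k. card (Cs i)) = card (Cs 1) * (\<Prod>i\<in>{1..k}-{1}. card (Cs i))"
    by (rule prod.remove) (use assms in auto)
  also have "(\<Prod>i\<in>{1..k}-{1}. card (Cs i)) = (\<Prod>i\<in>{1..k}-{1}. p)"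
    using c by (intro prod.cong) (auto simp: S_def)
  also have "\<dots> = p ^ (k - 1)" using assms by simp
  also have "card (Cs 1) = p * (p - k + 1)" using c assms by (simp add: S_def)
  finally have eq: "(\<Prod>i=1..k. card (Cs i)) = p * (p - k + 1) * p ^ (k - 1)" .
  have "p ^ k = p * p ^ (k-1)" using assms by (cases k) simp_all
  moreover have "p ^ (k - 1) > 0" using p2 by simp
  moreover have "p - k + 1 \<ge> 2" using assms by simp
  ultimately have "p ^ k < p * (p - k + 1) * p ^ (k - 1)" using p2 by simp
  then have lt: "p ^ k < (\<Prod>i=1..k. card (Cs i))" using eq by simp
  have sub: "\<forall>i\<in>{1..k}. Cs i \<subseteq> F" unfolding Cs_def by blast
  show ?thesis using lt sub cr by blast
qed

end
definition ipt :: "(nat \<Rightarrow> real) \<Rightarrow> (nat \<Rightarrow> real) \<Rightarrow> nat \<Rightarrow> nat \<Rightarrow> nat \<Rightarrow> nat \<Rightarrow> real \<times> real" where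
  "ipt m c i j i' j' = ((c j' - c j) / (m i - m i'), m i * ((c j' - c j) / (m i - m i')) + c j)"

lemma line_inter: assumes "m i \<noteq> m i'"
  shows "line_ij m c i j \<inter> line_ij m c i' j' = {ipt m c i j i' j'}"
proof
  have d: "m i - m i' \<noteq> 0" using assms by simp
  show "line_ij m c i j \<inter> line_ij m c i' j' \<subseteq> {ipt m c i j i' j'}"
  proof
    fix P assume "P \<in> line_ij m c i j \<inter> line_ij m c i' j'"
    then obtain x x' where P: "P = (x, m i * x + c j)" "P = (x', m i' * x' + c j')"
      unfolding line_ij_def by blast
    then have "x = x'" "m i * x + c j = m i' * x + c j'" by auto
    then have x: "x = (c j' - c j) / (m i - m i')" using d by (simp add: field_simps)
    have "ipt m c i j i' j' = (x, m i * x + c j)" unfolding ipt_def x[symmetric] by (rule refl)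
    then show "P \<in> {ipt m c i j i' j'}" using P(1) by simp
  qed
  show "{ipt m c i j i' j'} \<subseteq> line_ij m c i j \<inter> line_ij m c i' j'"
  proof -
    define x where "x = (c j' - c j) / (m i - m i')"
    have "m i * x + c j = m i' * x + c j'" unfolding x_def using d by (simp add: field_simps)
    then show ?thesis unfolding line_ij_def ipt_def x_def[symmetric] by auto
  qed
qed

lemma line_par: assumes "c j \<noteq> c j'"
  shows "line_ij m c i j \<inter> line_ij m c i j' = {}"
  using assms unfolding line_ij_def by auto

locale geo =
  fixes p t :: nat and m c :: "nat \<Rightarrow> real" and T :: "real \<times> real \<Rightarrow> 'a set"
  assumes t1: "t \<ge> 1" and p3: "p \<ge> 3"
    and injm: "inj_on m {1..p}" and injc: "inj_on c {1..p}"
    and Tc: "\<forall>P \<in> (\<Union>i\<in>{1..p}. \<Union>j\<in>{1..p}. pts_ij p m c i j). finite (T P) \<and> card (T P) = t"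
    and Td: "\<forall>P \<in> (\<Union>i\<in>{1..p}. \<Union>j\<in>{1..p}. pts_ij p m c i j).
           \<forall>Q \<in> (\<Union>i\<in>{1..p}. \<Union>j\<in>{1..p}. pts_ij p m c i j). P \<noteq> Q \<longrightarrow> T P \<inter> T Q = {}"
begin

lemma TP: "P \<in> pts_ij p m c i j \<Longrightarrow> i\<in>{1..p} \<Longrightarrow> j\<in>{1..p} \<Longrightarrow> finite (T P) \<and> card (T P) = t"
  using Tc by blast

lemma TD: "P \<in> pts_ij p m c i j \<Longrightarrow> i\<in>{1..p} \<Longrightarrow> j\<in>{1..p} \<Longrightarrow>
  Q \<in> pts_ij p m c i' j' \<Longrightarrow> i'\<in>{1..p} \<Longrightarrow> j'\<in>{1..p} \<Longrightarrow> P \<noteq> Q \<Longrightarrow> T P \<inter> T Q = {}"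
  using Td by blast

lemma pts_sub: "pts_ij p m c i j \<subseteq> line_ij m c i j"
  unfolding pts_ij_def by blast

lemma ipt_in: assumes "i\<in>{1..p}" "j\<in>{1..p}" "i'\<in>{1..p}" "j'\<in>{1..p}" "i \<noteq> i'"
  shows "ipt m c i j i' j' \<in> pts_ij p m c i j \<inter> pts_ij p m c i' j'"
proof -
  have mm: "m i \<noteq> m i'" using injm assms by (meson inj_on_contraD)
  have L: "ipt m c i j i' j' \<in> line_ij m c i j \<inter> line_ij m c i' j'" using line_inter[OF mm] by blast
  have n1: "(i', j') \<noteq> (i, j)" "(i, j) \<noteq> (i', j')" using assms(5) by auto
  have 1: "ipt m c i j i' j' \<in> pts_ij p m c i j"
    unfolding pts_ij_def mem_Collect_eq using L n1(1) assms(3,4) by blast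
  have 2: "ipt m c i j i' j' \<in> pts_ij p m c i' j'"
    unfolding pts_ij_def mem_Collect_eq using L n1(2) assms(1,2) by blast
  show ?thesis using 1 2 by blast
qed

lemma Bint1: assumes "i\<in>{1..p}" "j\<in>{1..p}" "i'\<in>{1..p}" "j'\<in>{1..p}" "i \<noteq> i'"
  shows "B_ij p m c T i j \<inter> B_ij p m c T i' j' = T (ipt m c i j i' j')"
proof
  have mm: "m i \<noteq> m i'" using injm assms by (meson inj_on_contraD)
  show "B_ij p m c T i j \<inter> B_ij p m c T i' j' \<subseteq> T (ipt m c i j i' j')"
  proof
    fix x assume "x \<in> B_ij p m c T i j \<inter> B_ij p m c T i' j'"
    then obtain P Q where PQ: "P \<in> pts_ij p m c i j" "Q \<in> pts_ij p m c i' j'" "x \<in> T P" "x \<in> T Q"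
      unfolding B_ij_def by blast
    then have "P = Q" using TD[of P i j Q i' j'] assms by blast
    then have "P \<in> line_ij m c i j \<inter> line_ij m c i' j'" using PQ pts_sub by blast
    then have "P = ipt m c i j i' j'" using line_inter[OF mm] by blast
    then show "x \<in> T (ipt m c i j i' j')" using PQ by simp
  qed
  show "T (ipt m c i j i' j') \<subseteq> B_ij p m c T i j \<inter> B_ij p m c T i' j'"
    using ipt_in[OF assms] unfolding B_ij_def by blast
qed

lemma Bint2: assumes "i\<in>{1..p}" "j\<in>{1..p}" "j'\<in>{1..p}" "j \<noteq> j'"
  shows "B_ij p m c T i j \<inter> B_ij p m c T i j' = {}"
proof -
  have cc: "c j \<noteq> c j'" using injc assms by (meson inj_on_contraD)
  show ?thesis
  proof (rule ccontr)
    assume "B_ij p m c T i j \<inter> B_ij p m c T i j' \<noteq> {}"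
    then obtain x P Q where PQ: "P \<in> pts_ij p m c i j" "Q \<in> pts_ij p m c i j'" "x \<in> T P" "x \<in> T Q"
      unfolding B_ij_def by blast
    then have "P = Q" using TD[of P i j Q i j'] assms by blast
    then have "P \<in> line_ij m c i j \<inter> line_ij m c i j'" using PQ pts_sub by blast
    then show False using line_par[OF cc] by blast
  qed
qed

lemma pts_fin: assumes "i\<in>{1..p}" "j\<in>{1..p}" shows "finite (pts_ij p m c i j)"
proof -
  have "pts_ij p m c i j \<subseteq> (\<lambda>(i',j'). ipt m c i j i' j') ` ({1..p} \<times> {1..p})"
  proof
    fix P assume "P \<in> pts_ij p m c i j"
    then obtain i' j' where w: "i'\<in>{1..p}" "j'\<in>{1..p}" "(i', j') \<noteq> (i, j)"
      "P \<in> line_ij m c i j \<inter> line_ij m c i' j'" unfolding pts_ij_def by blast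
    show "P \<in> (\<lambda>(i',j'). ipt m c i j i' j') ` ({1..p} \<times> {1..p})"
    proof (cases "i = i'")
      case True
      then have "j \<noteq> j'" using w by simp
      then have "c j \<noteq> c j'" using w(2) assms(2) injc by (meson inj_on_contraD)
      then have "line_ij m c i j \<inter> line_ij m c i j' = {}" by (rule line_par)
      then show ?thesis using w(4) True by blast
    next
      case False
      then have "m i \<noteq> m i'" using w assms injm by (meson inj_on_contraD)
      then have "P = ipt m c i j i' j'" using line_inter w by blast
      then show ?thesis using w by force
    qed
  qed
  then show ?thesis by (rule finite_subset) simp
qed

lemma Bfin: assumes "i\<in>{1..p}" "j\<in>{1..p}" shows "finite (B_ij p m c T i j)"
  unfolding B_ij_def using pts_fin[OF assms] TP assms by blast

lemma Bbig: assumes "i\<in>{1..p}" "j\<in>{1..p}" shows "card (B_ij p m c T i j) \<ge> 2 * t"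
proof -
  define i' where "i' = (if i = 1 then 2 else 1::nat)"
  have i': "i' \<in> {1..p}" "i \<noteq> i'" using p3 unfolding i'_def by auto
  have o: "1 \<in> {1..p}" "2 \<in> {1..p}" using p3 by auto
  define P1 where "P1 = ipt m c i j i' 1"
  define P2 where "P2 = ipt m c i j i' 2"
  have P1: "P1 \<in> pts_ij p m c i j" using ipt_in[OF assms i'(1) o(1) i'(2)] P1_def by blast
  have P2: "P2 \<in> pts_ij p m c i j" using ipt_in[OF assms i'(1) o(2) i'(2)] P2_def by blast
  have mm: "m i \<noteq> m i'" using injm assms i' by (meson inj_on_contraD)
  have cc: "c 1 \<noteq> c 2" by (rule inj_on_contraD[OF injc _ o]) simp
  have "P1 \<noteq> P2"
  proof
    assume "P1 = P2"
    then have "(c 1 - c j) / (m i - m i') = (c 2 - c j) / (m i - m i')"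
      unfolding P1_def P2_def ipt_def by simp
    then show False using mm cc by (simp add: divide_cancel_right)
  qed
  then have dj: "T P1 \<inter> T P2 = {}" using TD[OF P1 assms P2 assms] by blast
  have "card (T P1 \<union> T P2) = 2 * t" using card_Un_disjoint[OF _ _ dj] TP[OF P1 assms] TP[OF P2 assms] by simp
  moreover have "T P1 \<union> T P2 \<subseteq> B_ij p m c T i j" unfolding B_ij_def using P1 P2 by blast
  ultimately show ?thesis using card_mono[OF Bfin[OF assms]] by metis
qed

abbreviation "G \<equiv> {1..p} \<times> {1..p}"
abbreviation "h \<equiv> (\<lambda>(i,j). B_ij p m c T i j)"

lemma h_inj: "inj_on h G"
proof (rule inj_onI)
  fix x y assume x: "x \<in> G" and y: "y \<in> G" and e: "h x = h y"
  obtain i j where ij: "x = (i,j)" by fastforce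
  obtain i' j' where ij': "y = (i',j')" by fastforce
  have c2: "card (B_ij p m c T i j) \<ge> 2 * t" using Bbig x ij by auto
  show "x = y"
  proof (rule ccontr)
    assume ne: "x \<noteq> y"
    show False
    proof (cases "i = i'")
      case True
      then have "j \<noteq> j'" using ne ij ij' by simp
      then have "B_ij p m c T i j = {}" using Bint2[of i j j'] x y ij ij' e True by auto
      then show False using c2 t1 by simp
    next
      case False
      then have "B_ij p m c T i j = T (ipt m c i j i' j')" using Bint1[of i j i' j'] x y ij ij' e by auto
      moreover have "card (T (ipt m c i j i' j')) = t"
        using ipt_in[of i j i' j'] TP x y ij ij' False by blast
      ultimately show False using c2 t1 by simp
    qed
  qed
qed

lemma Bfam_eq: "B_fam p m c T = h ` G"
proof
  show "B_fam p m c T \<subseteq> h ` G"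
  proof
    fix X assume "X \<in> B_fam p m c T"
    then obtain i j where "X = B_ij p m c T i j" "i \<in> {1..p}" "j \<in> {1..p}"
      unfolding B_fam_def by blast
    then have "X = h (i, j)" "(i, j) \<in> G" by simp_all
    then show "X \<in> h ` G" by (rule image_eqI)
  qed
  show "h ` G \<subseteq> B_fam p m c T"
  proof
    fix X assume "X \<in> h ` G"
    then obtain x where x: "x \<in> G" "X = h x" by (rule imageE)
    obtain i j where "x = (i, j)" by fastforce
    then have "X = B_ij p m c T i j" "i \<in> {1..p}" "j \<in> {1..p}" using x by auto
    then show "X \<in> B_fam p m c T" unfolding B_fam_def by blast
  qed
qed

definition sl where "sl X = fst (inv_into G h X)"

lemma sl_h: "x \<in> G \<Longrightarrow> sl (h x) = fst x"
  unfolding sl_def using h_inj by (simp add: inv_into_f_f)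

lemma is_grid: "grid (B_fam p m c T) sl p t"
proof
  show "finite (B_fam p m c T)" unfolding Bfam_eq by simp
  show "2 \<le> p" using p3 by simp
  show "1 \<le> t" using t1 .
  show "\<forall>X\<in>B_fam p m c T. sl X \<in> {1..p}" unfolding Bfam_eq using sl_h by force
  show "\<forall>s\<in>{1..p}. card {X \<in> B_fam p m c T. sl X = s} = p"
  proof
    fix s assume s: "s \<in> {1..p}"
    have "{X \<in> B_fam p m c T. sl X = s} = h ` ({s} \<times> {1..p})"
      unfolding Bfam_eq using sl_h s by force
    moreover have "inj_on h ({s} \<times> {1..p})" by (rule inj_on_subset[OF h_inj]) (use s in auto)
    ultimately show "card {X \<in> B_fam p m c T. sl X = s} = p" by (simp add: card_image card_cartesian_product)
  qed
  show "\<forall>X\<in>B_fam p m c T. \<forall>Y\<in>B_fam p m c T. (t \<le> card (X \<inter> Y)) = (X = Y \<or> sl X \<noteq> sl Y)"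
  proof (intro ballI)
    fix X Y assume "X \<in> B_fam p m c T" "Y \<in> B_fam p m c T"
    then obtain i j i' j' where X: "X = B_ij p m c T i j" "(i,j) \<in> G" and Y: "Y = B_ij p m c T i' j'" "(i',j') \<in> G"
      unfolding Bfam_eq by auto
    have sX: "sl X = i" using sl_h[OF X(2)] X by simp
    have sY: "sl Y = i'" using sl_h[OF Y(2)] Y by simp
    show "(t \<le> card (X \<inter> Y)) = (X = Y \<or> sl X \<noteq> sl Y)"
    proof (cases "X = Y")
      case True
      then show ?thesis using Bbig[of i j] X by simp
    next
      case False
      show ?thesis
      proof (cases "i = i'")
        case True
        then have "j \<noteq> j'" using False X Y by auto
        then have "X \<inter> Y = {}" using Bint2[of i j j'] X Y True by auto
        then show ?thesis using t1 sX sY True False by simp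
      next
        case ne: False
        then have "X \<inter> Y = T (ipt m c i j i' j')" using Bint1[of i j i' j'] X Y by auto
        moreover have "card (T (ipt m c i j i' j')) = t"
          using ipt_in[of i j i' j'] TP X Y ne by blast
        ultimately show ?thesis using sX sY ne by simp
      qed
    qed
  qed
qed

end
theorem theorem5p4:
  fixes t p k :: nat
    and m c :: "nat \<Rightarrow> real"
    and T :: "real \<times> real \<Rightarrow> 'a set"
    and L :: "'a set set"
    and As :: "nat \<Rightarrow> 'a set set"
  assumes "t \<ge> 1" and "p \<ge> 3"
    and "inj_on m {1..p}" and "inj_on c {1..p}"
    and "\<forall>P \<in> (\<Union>i\<in>{1..p}. \<Union>j\<in>{1..p}. pts_ij p m c i j). finite (T P) \<and> card (T P) = t"
    and "\<forall>P \<in> (\<Union>i\<in>{1..p}. \<Union>j\<in>{1..p}. pts_ij p m c i j).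
           \<forall>Q \<in> (\<Union>i\<in>{1..p}. \<Union>j\<in>{1..p}. pts_ij p m c i j). P \<noteq> Q \<longrightarrow> T P \<inter> T Q = {}"
    and "L \<subseteq> B_fam p m c T" and "t_intersecting t L"
    and "card L = l_fam (B_fam p m c T) t"
    and "k \<ge> 1"
    and "\<forall>i\<in>{1..k}. As i \<subseteq> B_fam p m c T"
    and "cross_t_intersecting t k As"
  shows "(kappa (B_fam p m c T) t = real (card L) \<and> card L = p) \<and>
         (real k \<ge> kappa (B_fam p m c T) t \<and> (\<forall>i\<in>{1..k}. As i = L) \<longrightarrow>
           (\<forall>Cs. (\<forall>i\<in>{1..k}. Cs i \<subseteq> B_fam p m c T) \<and> cross_t_intersecting t k Cs \<longrightarrow>
                 (\<Prod>i=1..k. card (Cs i)) \<le> (\<Prod>i=1..k. card (As i)))) \<and>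
         (real k < kappa (B_fam p m c T) t \<and> (\<forall>i\<in>{1..k}. As i = L) \<longrightarrow>
           (\<exists>Cs. (\<forall>i\<in>{1..k}. Cs i \<subseteq> B_fam p m c T) \<and> cross_t_intersecting t k Cs \<and>
                 (\<Prod>i=1..k. card (Cs i)) > (\<Prod>i=1..k. card (As i))))"
proof -
  interpret geo p t m c T using assms(1-6) by unfold_locales
  interpret grid "B_fam p m c T" sl p t by (rule is_grid)
  have cL: "card L = p" using assms(9) l_fam_eq by simp
  have pr: "(\<Prod>i=1..k. card (As i)) = p ^ k" if "\<forall>i\<in>{1..k}. As i = L"
    using that cL by simp
  show ?thesis
  proof (intro conjI impI allI)
    show "kappa (B_fam p m c T) t = real (card L)" using kappa_eq cL by simp
    show "card L = p" by (rule cL)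
  next
    fix Cs assume a: "real k \<ge> kappa (B_fam p m c T) t \<and> (\<forall>i\<in>{1..k}. As i = L)"
      and b: "(\<forall>i\<in>{1..k}. Cs i \<subseteq> B_fam p m c T) \<and> cross_t_intersecting t k Cs"
    have "p \<le> k" using a kappa_eq by simp
    then show "(\<Prod>i=1..k. card (Cs i)) \<le> (\<Prod>i=1..k. card (As i))"
      using prod_bound b pr a by simp
  next
    assume a: "real k < kappa (B_fam p m c T) t \<and> (\<forall>i\<in>{1..k}. As i = L)"
    have "k < p" using a kappa_eq by simp
    then show "\<exists>Cs. (\<forall>i\<in>{1..k}. Cs i \<subseteq> B_fam p m c T) \<and> cross_t_intersecting t k Cs \<and>
                 (\<Prod>i=1..k. card (Cs i)) > (\<Prod>i=1..k. card (As i))"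
      using construct assms(10) pr a by simp
  qed
qed

end
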